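(* Let $\nu\in\mathcal N$ and $N\in\mathcal N$ with $\sum_m mN^{(a)}_m=M_a$ for all $a$. If a generic string solution of pattern $N$ to the Bethe equation exists, then for every $(a,m)\in H'(N)$, every $1\le\alpha\le N^{(a)}_m$ and every $2\le i\le m$, $$\sum_{k=1}^{\min(i-1,\,m+1-i)}\Big\{d'_a\big(P^{(a)}_{m+1-2k}+N^{(a)}_{m+1-2k}\big)+\Delta^{(a)}_{m+1-2k}\Big\}>0.$$
   Context: Lie data. Fix an affine type $X^{(r)}_N$ among $A^{(1)}_n\,(n\ge1)$, $B^{(1)}_n\,(n\ge3)$, $C^{(1)}_n\,(n\ge2)$, $D^{(1)}_n\,(n\ge4)$, $E^{(1)}_{6,7,8}$, $F^{(1)}_4$, $G^{(1)}_2$, $A^{(2)}_{2n}\,(n\ge1)$, $A^{(2)}_{2n-1}\,(n\ge2)$, $D^{(2)}_{n+1}\,(n\ge2)$, $E^{(2)}_6$, $D^{(3)}_4$. Let $\mathfrak g=X_N$ (rank $N$), $\sigma$ a diagram automorphism of order $r$, $\mathfrak g_0$ the $\sigma$-invariant subalgebra ($X_N$ if $r=1$, then $n=N$; $B_n,C_n,B_n,F_4,G_2$ for $A^{(2)}_{2n},A^{(2)}_{2n-1},D^{(2)}_{n+1},E^{(2)}_6,D^{(3)}_4$), $n=\mathrm{rank}\,\mathfrak g_0$. Cartan matrices: $A_{ij}=2(\alpha_i,\alpha_j)/(\alpha_i,\alpha_i)$; $A'$ (indices $1..N$) for $\mathfrak g$, $A$ (indices $1..n$) for $\mathfrak g_0$;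 node $a\le n$ of $\mathfrak g$ lies in the $\sigma$-orbit corresponding to node $a$ of $\mathfrak g_0$, and $A_{ab}<0\iff A'_{ab}<0$ ($a,b\le n$). For $A^{(2)}_{2n}$: $\mathfrak g=A_{2n}$ with nodes $1..2n$ along the chain, $\sigma(i)=2n+1-i$. $d'_i$: coprime positive integers with $(d'_iA'_{ij})$ symmetric; $d_a$: coprime positive integers with $(d_aA_{ab})$ symmetric. $\epsilon'_i=r$ if $\sigma(i)=i$, else $1$; $\epsilon_a=2$ if $A'_{a\sigma(a)}<0$, else $1$; $\kappa_0=2$ for $A^{(2)}_{2n}$, else $1$; $\epsilon'_{ab}=\max(\epsilon'_a,\epsilon'_b)$; $\tilde n=n+1$ for $A^{(2)}_{2n}$ and $\tilde n=n$ otherwise (index $n+1$ refers to node $n+1=\sigma(n)$ of $A_{2n}$, with $\epsilon'_{n+1}=d'_{n+1}=1$). $H=\{(a,m):1\le a\le n,m\ge1\}$; $\mathcal N$ = finitely supported families $(N^{(a)}_m)_{(a,m)\in H}$ of nonnegative integers; $H'(N)=\{(a,m):N^{(a)}_m>0\}$. For $\nu,N\in\mathcal N$: $\gamma^{(a)}_m=\sum_k\min(m,k)\nu^{(a)}_k$; $P^{(a)}_m=\gamma^{(a)}_m-\sum_{(b,k)\in H}\frac{A_{ab}}{\epsilon_ad'_b}\min(d'_am,d'_bk)N^{(b)}_k$. $\Delta^{(a)}_j=0$, except when $r=1$ and there is $a'$ with $d_a>d_{a'}=1$ and $A_{aa'}\ne0$, in which case $\Delta^{(a)}_j=-N^{(a')}_{2j}$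 if $d_a=2$ and $\Delta^{(a)}_j=-(N^{(a')}_{3j-1}+N^{(a')}_{3j}+N^{(a')}_{3j+1})$ if $d_a=3$. Bethe equation. Given $\nu$ and $M_1,\dots,M_n\ge0$, unknowns $x^{(a)}_i$ ($1\le a\le n$, $1\le i\le M_a$); for $A^{(2)}_{2n}$ set $x^{(n+1)}_j:=-x^{(n)}_j$, $M_{n+1}:=M_n$. The equation is $F^{(a)}_{i+}G^{(a)}_{i-}=F^{(a)}_{i-}G^{(a)}_{i+}$ for all $a,i$, with $F^{(a)}_{i+}=\prod_{k\ge1}(x^{(a)}_iq^{k\kappa_0\epsilon'_ad'_a}-1)^{\nu^{(a)}_k}$, $F^{(a)}_{i-}=\prod_{k\ge1}(x^{(a)}_i-q^{k\kappa_0\epsilon'_ad'_a})^{\nu^{(a)}_k}$, $G^{(a)}_{i+}=\prod_{b=1}^{\tilde n}\prod_{j=1}^{M_b}\big((x^{(a)}_i)^{\epsilon'_{ab}/\epsilon'_a}q^{\kappa_0\epsilon'_{ab}d'_aA'_{ab}}-(x^{(b)}_j)^{\epsilon'_{ab}/\epsilon'_b}\big)$, $G^{(a)}_{i-}=\prod_{b=1}^{\tilde n}\prod_{j=1}^{M_b}\big((x^{(a)}_i)^{\epsilon'_{ab}/\epsilon'_a}-(x^{(b)}_j)^{\epsilon'_{ab}/\epsilon'_b}q^{\kappa_0\epsilon'_{ab}d'_aA'_{ab}}\big)$. Solutions have each $x^{(a)}_i$ meromorphic in $q$ near $q=0$; $\mathrm{ord}(f)$ is the leading exponent of the Laurent expansion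 at $0$ ($\infty$ if $f\equiv0$), $f^0$ the leading coefficient, $\tilde f=q^{-\mathrm{ord}f}f$. String solutions. A string solution of pattern $N$ is a meromorphic solution with (i) $\mathrm{ord}(F^{(a)}_{i+}G^{(a)}_{i-})<\infty$ for all $(a,i)$; (ii) the unknowns can be relabeled $x^{(a)}_{m\alpha i}$ ($(a,m)\in H'(N)$, $1\le\alpha\le N^{(a)}_m$, $1\le i\le m$) with $\mathrm{ord}(x^{(a)}_{m\alpha i})=(m+1-2i)\kappa_0\epsilon'_ad'_a$ and $x^{(a)0}_{m\alpha1}=\dots=x^{(a)0}_{m\alpha m}\ne0$. Write $F^{(a)}_{m\alpha i\pm},G^{(a)}_{m\alpha i\pm}$ for the corresponding $F,G$. Put (with $N^{(n+1)}_k:=N^{(n)}_k$ for $A^{(2)}_{2n}$) $\xi^{(a)}_{m\alpha i+}=\kappa_0\epsilon'_ad'_a\sum_k\nu^{(a)}_k\min(m+1-2i+k,0)$, $\xi^{(a)}_{m\alpha i-}=\kappa_0\epsilon'_ad'_a\sum_k\nu^{(a)}_k\min(m+1-2i,k)$, $\eta^{(a)}_{m\alpha i+}=\kappa_0\sum_{b=1}^{\tilde n}\sum_{k}\sum_{\beta=1}^{N^{(b)}_k}\sum_{j=1}^k\epsilon'_{ab}\min(d'_a(m+1-2i+A'_{ab}),d'_b(k+1-2j))$, $\eta^{(a)}_{m\alpha i-}=\kappa_0\sum_{b=1}^{\tilde n}\sum_{k}\sum_{\beta=1}^{N^{(b)}_k}\sum_{j=1}^k\epsilon'_{ab}\min(d'_a(m+1-2i),d'_b(k+1-2j+A'_{ba}))$,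 $\zeta^{(a)}_{m\alpha i}=\mathrm{ord}(\tilde x^{(a)}_{m\alpha i}-\tilde x^{(a)}_{m\alpha,i-1})$ for $2\le i\le m$, $\zeta^{(a)}_{m\alpha1}=\zeta^{(a)}_{m\alpha,m+1}=0$. The string solution is generic if $\mathrm{ord}F^{(a)}_{m\alpha i\pm}=\xi^{(a)}_{m\alpha i\pm}$, $\mathrm{ord}G^{(a)}_{m\alpha i+}=\eta^{(a)}_{m\alpha i+}+\zeta^{(a)}_{m\alpha i}$, $\mathrm{ord}G^{(a)}_{m\alpha i-}=\eta^{(a)}_{m\alpha i-}+\zeta^{(a)}_{m\alpha,i+1}$ for all indices. *)

theory Defs
  imports "HOL-Complex_Analysis.Laurent_Convergence"
begin

section \<open>Finite-type Cartan data (Bourbaki numbering)\<close>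

datatype fintype = FA nat | FB nat | FC nat | FD nat | FE6 | FE7 | FE8 | FF4 | FG2

text \<open>Cartan matrix entries A_ij = 2(alpha_i,alpha_j)/(alpha_i,alpha_i), nodes numbered 1..rank
  as in Bourbaki (B_n, C_n: alpha_n is the short resp. long root; F_4: alpha_1, alpha_2 long;
  G_2: alpha_1 short; D_n: alpha_(n-2) adjacent to alpha_(n-1) and alpha_n;
  E: chain 1-3-4-5-6-7-8 with 2 attached to 4).  Only entries with indices in 1..rank are used.\<close>

definition chain_adj :: "nat \<Rightarrow> nat \<Rightarrow> bool" where
  "chain_adj i j \<longleftrightarrow> i + 1 = j \<or> j + 1 = i"

definition E_adj :: "nat \<Rightarrow> nat \<Rightarrow> nat \<Rightarrow> bool" where
  "E_adj r i j \<longleftrightarrow> i \<le> r \<and> j \<le> r \<and>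
     ({i, j} = {1, 3} \<or> {i, j} = {2, 4} \<or> (3 \<le> i \<and> 3 \<le> j \<and> chain_adj i j))"

fun cartan :: "fintype \<Rightarrow> nat \<Rightarrow> nat \<Rightarrow> int" where
  "cartan (FA n) i j = (if i = j then 2 else if chain_adj i j then -1 else 0)"
| "cartan (FB n) i j = (if i = j then 2 else if i = n \<and> j = n - 1 then -2
                        else if chain_adj i j then -1 else 0)"
| "cartan (FC n) i j = (if i = j then 2 else if i = n - 1 \<and> j = n then -2
                        else if chain_adj i j then -1 else 0)"
| "cartan (FD n) i j = (if i = j then 2
                        else if (chain_adj i j \<and> i \<le> n - 1 \<and> j \<le> n - 1) \<or> {i, j} = {n - 2, n}
                        then -1 else 0)"
| "cartan FE6 i j = (if i = j then 2 else if E_adj 6 i j then -1 else 0)"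
| "cartan FE7 i j = (if i = j then 2 else if E_adj 7 i j then -1 else 0)"
| "cartan FE8 i j = (if i = j then 2 else if E_adj 8 i j then -1 else 0)"
| "cartan FF4 i j = (if i = j then 2 else if i = 3 \<and> j = 2 then -2
                     else if chain_adj i j then -1 else 0)"
| "cartan FG2 i j = (if i = j then 2 else if i = 1 \<and> j = 2 then -3
                     else if i = 2 \<and> j = 1 then -1 else 0)"

text \<open>Coprime positive integers d_i with (d_i A_ij) symmetric.\<close>
fun dsym :: "fintype \<Rightarrow> nat \<Rightarrow> nat" where
  "dsym (FB n) i = (if i = n then 1 else 2)"
| "dsym (FC n) i = (if i = n then 2 else 1)"
| "dsym FF4 i = (if i \<le> 2 then 2 else 1)"
| "dsym FG2 i = (if i = 1 then 1 else 3)"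
| "dsym _ i = 1"

datatype afftype =
    A1 nat | B1 nat | C1 nat | D1 nat | E6_1 | E7_1 | E8_1 | F4_1 | G2_1
  | A2_even nat   \<comment> \<open>A^(2)_(2n)\<close>
  | A2_odd nat    \<comment> \<open>A^(2)_(2n-1)\<close>
  | D2 nat        \<comment> \<open>D^(2)_(n+1)\<close>
  | E6_2 | D4_3

fun valid_type :: "afftype \<Rightarrow> bool" where
  "valid_type (A1 n) = (n \<ge> 1)"
| "valid_type (B1 n) = (n \<ge> 3)"
| "valid_type (C1 n) = (n \<ge> 2)"
| "valid_type (D1 n) = (n \<ge> 4)"
| "valid_type (A2_even n) = (n \<ge> 1)"
| "valid_type (A2_odd n) = (n \<ge> 2)"
| "valid_type (D2 n) = (n \<ge> 2)"
| "valid_type _ = True"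

fun g_type :: "afftype \<Rightarrow> fintype" where
  "g_type (A1 n) = FA n" | "g_type (B1 n) = FB n" | "g_type (C1 n) = FC n"
| "g_type (D1 n) = FD n" | "g_type E6_1 = FE6" | "g_type E7_1 = FE7" | "g_type E8_1 = FE8"
| "g_type F4_1 = FF4" | "g_type G2_1 = FG2"
| "g_type (A2_even n) = FA (2 * n)" | "g_type (A2_odd n) = FA (2 * n - 1)"
| "g_type (D2 n) = FD (n + 1)" | "g_type E6_2 = FE6" | "g_type D4_3 = FD 4"

text \<open>The sigma-invariant subalgebra g_0\<close>
fun g0_type :: "afftype \<Rightarrow> fintype" where
  "g0_type (A2_even n) = FB n" | "g0_type (A2_odd n) = FC n" | "g0_type (D2 n) = FB n"
| "g0_type E6_2 = FF4" | "g0_type D4_3 = FG2" | "g0_type t = g_type t"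

fun rk :: "afftype \<Rightarrow> nat" where
  "rk (A1 n) = n" | "rk (B1 n) = n" | "rk (C1 n) = n" | "rk (D1 n) = n"
| "rk E6_1 = 6" | "rk E7_1 = 7" | "rk E8_1 = 8" | "rk F4_1 = 4" | "rk G2_1 = 2"
| "rk (A2_even n) = n" | "rk (A2_odd n) = n" | "rk (D2 n) = n" | "rk E6_2 = 4" | "rk D4_3 = 2"

fun tw :: "afftype \<Rightarrow> nat" where
  "tw (A2_even n) = 2" | "tw (A2_odd n) = 2" | "tw (D2 n) = 2" | "tw E6_2 = 2"
| "tw D4_3 = 3" | "tw _ = 1"

fun is_A2_even :: "afftype \<Rightarrow> bool" where
  "is_A2_even (A2_even n) = True" | "is_A2_even _ = False"

text \<open>Relabelling of the nodes of g (so that node a \<le> n of g lies in the sigma-orbit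
  corresponding to node a of g_0): a node label of g is sent to its Bourbaki label.\<close>
fun glabel :: "afftype \<Rightarrow> nat \<Rightarrow> nat" where
  "glabel E6_2 i = (if i = 1 then 2 else if i = 2 then 4 else if i = 4 then 1 else i)"
| "glabel _ i = i"

definition Ap :: "afftype \<Rightarrow> nat \<Rightarrow> nat \<Rightarrow> int" where
  "Ap t i j = cartan (g_type t) (glabel t i) (glabel t j)"

definition Ac :: "afftype \<Rightarrow> nat \<Rightarrow> nat \<Rightarrow> int" where
  "Ac t a b = cartan (g0_type t) a b"

fun sigma :: "afftype \<Rightarrow> nat \<Rightarrow> nat" where
  "sigma (A2_even n) i = 2 * n + 1 - i"
| "sigma (A2_odd n) i = 2 * n - i"
| "sigma (D2 n) i = (if i = n then n + 1 else if i = n + 1 then n else i)"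
| "sigma E6_2 i = (if i = 3 then 5 else if i = 5 then 3 else if i = 4 then 6
                   else if i = 6 then 4 else i)"
| "sigma D4_3 i = (if i = 1 then 3 else if i = 3 then 4 else if i = 4 then 1 else i)"
| "sigma _ i = i"

text \<open>d'_i for g (simply laced in all twisted cases)\<close>
definition dp :: "afftype \<Rightarrow> nat \<Rightarrow> nat" where
  "dp t i = (if tw t = 1 then dsym (g_type t) i else 1)"

definition dc :: "afftype \<Rightarrow> nat \<Rightarrow> nat" where
  "dc t a = dsym (g0_type t) a"

definition epsp :: "afftype \<Rightarrow> nat \<Rightarrow> nat" where
  "epsp t i = (if sigma t i = i then tw t else 1)"

definition epsc :: "afftype \<Rightarrow> nat \<Rightarrow> nat" where
  "epsc t a = (if Ap t a (sigma t a) < 0 then 2 else 1)"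

definition kappa0 :: "afftype \<Rightarrow> nat" where
  "kappa0 t = (if is_A2_even t then 2 else 1)"

definition epsp2 :: "afftype \<Rightarrow> nat \<Rightarrow> nat \<Rightarrow> nat" where
  "epsp2 t a b = max (epsp t a) (epsp t b)"

definition ntil :: "afftype \<Rightarrow> nat" where
  "ntil t = (if is_A2_even t then rk t + 1 else rk t)"

text \<open>Families indexed by H = {(a,m). 1 \<le> a \<le> n, m \<ge> 1}, represented as functions
  nat \<Rightarrow> nat \<Rightarrow> nat (only values on H matter); membership in the set of finitely
  supported families.\<close>
definition fin_supp :: "afftype \<Rightarrow> (nat \<Rightarrow> nat \<Rightarrow> nat) \<Rightarrow> bool" where
  "fin_supp t N \<longleftrightarrow> finite {(a, m). 1 \<le> a \<and> a \<le> rk t \<and> 1 \<le> m \<and> N a m \<noteq> 0}"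

definition supp :: "(nat \<Rightarrow> nat \<Rightarrow> nat) \<Rightarrow> nat \<Rightarrow> nat set" where
  "supp N a = {k. 1 \<le> k \<and> N a k \<noteq> 0}"

definition gam :: "(nat \<Rightarrow> nat \<Rightarrow> nat) \<Rightarrow> nat \<Rightarrow> nat \<Rightarrow> real" where
  "gam \<nu> a m = (\<Sum>k\<in>supp \<nu> a. real (min m k * \<nu> a k))"

definition vacP :: "afftype \<Rightarrow> (nat \<Rightarrow> nat \<Rightarrow> nat) \<Rightarrow> (nat \<Rightarrow> nat \<Rightarrow> nat) \<Rightarrow> nat \<Rightarrow> nat \<Rightarrow> real" where
  "vacP t \<nu> N a m = gam \<nu> a m -
     (\<Sum>b\<in>{1..rk t}. \<Sum>k\<in>supp N b.
        real_of_int (Ac t a b) / real (epsc t a * dp t b)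
        * real (min (dp t a * m) (dp t b * k)) * real (N b k))"

definition Delta :: "afftype \<Rightarrow> (nat \<Rightarrow> nat \<Rightarrow> nat) \<Rightarrow> nat \<Rightarrow> nat \<Rightarrow> int" where
  "Delta t N a j =
     (if tw t = 1 \<and> (\<exists>a'. 1 \<le> a' \<and> a' \<le> rk t \<and> dc t a > dc t a' \<and> dc t a' = 1 \<and> Ac t a a' \<noteq> 0)
      then (let a' = (SOME a'. 1 \<le> a' \<and> a' \<le> rk t \<and> dc t a > dc t a' \<and> dc t a' = 1 \<and> Ac t a a' \<noteq> 0)
            in if dc t a = 2 then - int (N a' (2 * j))
               else if dc t a = 3 then - int (N a' (3 * j - 1) + N a' (3 * j) + N a' (3 * j + 1))
               else 0)
      else 0)"

section \<open>The Bethe equation over meromorphic functions of q near 0\<close>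

text \<open>Meromorphic functions of q near 0 are represented by their Laurent expansions at 0,
  i.e. formal Laurent series with positive radius of convergence; q is fls_X.\<close>

definition qp :: "int \<Rightarrow> complex fls" where
  "qp k = fls_X_intpow k"

definition xext :: "afftype \<Rightarrow> (nat \<Rightarrow> nat \<Rightarrow> complex fls) \<Rightarrow> nat \<Rightarrow> nat \<Rightarrow> complex fls" where
  "xext t x b j = (if is_A2_even t \<and> b = rk t + 1 then - x (rk t) j else x b j)"

definition Mext :: "afftype \<Rightarrow> (nat \<Rightarrow> nat) \<Rightarrow> nat \<Rightarrow> nat" where
  "Mext t M b = (if is_A2_even t \<and> b = rk t + 1 then M (rk t) else M b)"

definition Next :: "afftype \<Rightarrow> (nat \<Rightarrow> nat \<Rightarrow> nat) \<Rightarrow> nat \<Rightarrow> nat \<Rightarrow> nat" where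
  "Next t N b k = (if is_A2_even t \<and> b = rk t + 1 then N (rk t) k else N b k)"

definition Fplus :: "afftype \<Rightarrow> (nat \<Rightarrow> nat \<Rightarrow> nat) \<Rightarrow> (nat \<Rightarrow> nat \<Rightarrow> complex fls) \<Rightarrow> nat \<Rightarrow> nat \<Rightarrow> complex fls" where
  "Fplus t \<nu> x a i = (\<Prod>k\<in>supp \<nu> a.
      (x a i * qp (int (k * kappa0 t * epsp t a * dp t a)) - 1) ^ \<nu> a k)"

definition Fminus :: "afftype \<Rightarrow> (nat \<Rightarrow> nat \<Rightarrow> nat) \<Rightarrow> (nat \<Rightarrow> nat \<Rightarrow> complex fls) \<Rightarrow> nat \<Rightarrow> nat \<Rightarrow> complex fls" where
  "Fminus t \<nu> x a i = (\<Prod>k\<in>supp \<nu> a.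
      (x a i - qp (int (k * kappa0 t * epsp t a * dp t a))) ^ \<nu> a k)"

definition Gplus :: "afftype \<Rightarrow> (nat \<Rightarrow> nat) \<Rightarrow> (nat \<Rightarrow> nat \<Rightarrow> complex fls) \<Rightarrow> nat \<Rightarrow> nat \<Rightarrow> complex fls" where
  "Gplus t M x a i = (\<Prod>b\<in>{1..ntil t}. \<Prod>j\<in>{1..Mext t M b}.
      x a i ^ (epsp2 t a b div epsp t a)
        * qp (int (kappa0 t * epsp2 t a b * dp t a) * Ap t a b)
      - xext t x b j ^ (epsp2 t a b div epsp t b))"

definition Gminus :: "afftype \<Rightarrow> (nat \<Rightarrow> nat) \<Rightarrow> (nat \<Rightarrow> nat \<Rightarrow> complex fls) \<Rightarrow> nat \<Rightarrow> nat \<Rightarrow> complex fls" where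
  "Gminus t M x a i = (\<Prod>b\<in>{1..ntil t}. \<Prod>j\<in>{1..Mext t M b}.
      x a i ^ (epsp2 t a b div epsp t a)
      - xext t x b j ^ (epsp2 t a b div epsp t b)
        * qp (int (kappa0 t * epsp2 t a b * dp t a) * Ap t a b))"

definition bethe :: "afftype \<Rightarrow> (nat \<Rightarrow> nat \<Rightarrow> nat) \<Rightarrow> (nat \<Rightarrow> nat) \<Rightarrow> (nat \<Rightarrow> nat \<Rightarrow> complex fls) \<Rightarrow> bool" where
  "bethe t \<nu> M x \<longleftrightarrow>
     (\<forall>a\<in>{1..rk t}. \<forall>i\<in>{1..M a}.
        Fplus t \<nu> x a i * Gminus t M x a i = Fminus t \<nu> x a i * Gplus t M x a i)"

text \<open>Order at q = 0 with value None standing for +infinity (f = 0); leading coefficient\<close>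
definition ordE :: "complex fls \<Rightarrow> int option" where
  "ordE f = (if f = 0 then None else Some (fls_subdegree f))"

definition lcoeff :: "complex fls \<Rightarrow> complex" where
  "lcoeff f = fls_nth f (fls_subdegree f)"

definition oplus :: "int \<Rightarrow> int option \<Rightarrow> int option" where
  "oplus e z = map_option (\<lambda>v. e + v) z"

definition Idx :: "(nat \<Rightarrow> nat \<Rightarrow> nat) \<Rightarrow> nat \<Rightarrow> (nat \<times> nat \<times> nat) set" where
  "Idx N a = {(m, \<alpha>, i). 1 \<le> m \<and> 0 < N a m \<and> 1 \<le> \<alpha> \<and> \<alpha> \<le> N a m \<and> 1 \<le> i \<and> i \<le> m}"

text \<open>lab a is the relabelling (m,alpha,i) \<mapsto> original index in 1..M_a\<close>
definition string_solution ::
  "afftype \<Rightarrow> (nat \<Rightarrow> nat \<Rightarrow> nat) \<Rightarrow> (nat \<Rightarrow> nat \<Rightarrow> nat) \<Rightarrow> (nat \<Rightarrow> nat)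
   \<Rightarrow> (nat \<Rightarrow> nat \<Rightarrow> complex fls) \<Rightarrow> (nat \<Rightarrow> nat \<times> nat \<times> nat \<Rightarrow> nat) \<Rightarrow> bool" where
  "string_solution t \<nu> N M x lab \<longleftrightarrow>
     (\<forall>a\<in>{1..rk t}. \<forall>i\<in>{1..M a}. fls_conv_radius (x a i) > 0) \<and>
     bethe t \<nu> M x \<and>
     (\<forall>a\<in>{1..rk t}. \<forall>i\<in>{1..M a}. Fplus t \<nu> x a i * Gminus t M x a i \<noteq> 0) \<and>
     (\<forall>a\<in>{1..rk t}. bij_betw (lab a) (Idx N a) {1..M a}) \<and>
     (\<forall>a\<in>{1..rk t}. \<forall>(m, \<alpha>, i)\<in>Idx N a.
        x a (lab a (m, \<alpha>, i)) \<noteq> 0 \<and>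
        fls_subdegree (x a (lab a (m, \<alpha>, i)))
          = (int m + 1 - 2 * int i) * int (kappa0 t * epsp t a * dp t a) \<and>
        lcoeff (x a (lab a (m, \<alpha>, i))) = lcoeff (x a (lab a (m, \<alpha>, 1))))"

definition xi_plus :: "afftype \<Rightarrow> (nat \<Rightarrow> nat \<Rightarrow> nat) \<Rightarrow> nat \<Rightarrow> nat \<Rightarrow> nat \<Rightarrow> int" where
  "xi_plus t \<nu> a m i = int (kappa0 t * epsp t a * dp t a) *
     (\<Sum>k\<in>supp \<nu> a. int (\<nu> a k) * min (int m + 1 - 2 * int i + int k) 0)"

definition xi_minus :: "afftype \<Rightarrow> (nat \<Rightarrow> nat \<Rightarrow> nat) \<Rightarrow> nat \<Rightarrow> nat \<Rightarrow> nat \<Rightarrow> int" where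
  "xi_minus t \<nu> a m i = int (kappa0 t * epsp t a * dp t a) *
     (\<Sum>k\<in>supp \<nu> a. int (\<nu> a k) * min (int m + 1 - 2 * int i) (int k))"

definition eta_plus :: "afftype \<Rightarrow> (nat \<Rightarrow> nat \<Rightarrow> nat) \<Rightarrow> nat \<Rightarrow> nat \<Rightarrow> nat \<Rightarrow> int" where
  "eta_plus t N a m i = int (kappa0 t) *
     (\<Sum>b\<in>{1..ntil t}. \<Sum>k\<in>supp (Next t N) b. \<Sum>\<beta>\<in>{1..Next t N b k}. \<Sum>j\<in>{1..k}.
        int (epsp2 t a b) *
        min (int (dp t a) * (int m + 1 - 2 * int i + Ap t a b))
            (int (dp t b) * (int k + 1 - 2 * int j)))"

definition eta_minus :: "afftype \<Rightarrow> (nat \<Rightarrow> nat \<Rightarrow> nat) \<Rightarrow> nat \<Rightarrow> nat \<Rightarrow> nat \<Rightarrow> int" where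
  "eta_minus t N a m i = int (kappa0 t) *
     (\<Sum>b\<in>{1..ntil t}. \<Sum>k\<in>supp (Next t N) b. \<Sum>\<beta>\<in>{1..Next t N b k}. \<Sum>j\<in>{1..k}.
        int (epsp2 t a b) *
        min (int (dp t a) * (int m + 1 - 2 * int i))
            (int (dp t b) * (int k + 1 - 2 * int j + Ap t b a)))"

definition zeta :: "(nat \<Rightarrow> nat \<Rightarrow> complex fls) \<Rightarrow> (nat \<Rightarrow> nat \<times> nat \<times> nat \<Rightarrow> nat)
                     \<Rightarrow> nat \<Rightarrow> nat \<Rightarrow> nat \<Rightarrow> nat \<Rightarrow> int option" where
  "zeta x lab a m \<alpha> i =
     (if 2 \<le> i \<and> i \<le> m
      then ordE (fls_base_factor (x a (lab a (m, \<alpha>, i)))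
                 - fls_base_factor (x a (lab a (m, \<alpha>, i - 1))))
      else Some 0)"

definition generic_string_solution ::
  "afftype \<Rightarrow> (nat \<Rightarrow> nat \<Rightarrow> nat) \<Rightarrow> (nat \<Rightarrow> nat \<Rightarrow> nat) \<Rightarrow> (nat \<Rightarrow> nat)
   \<Rightarrow> (nat \<Rightarrow> nat \<Rightarrow> complex fls) \<Rightarrow> (nat \<Rightarrow> nat \<times> nat \<times> nat \<Rightarrow> nat) \<Rightarrow> bool" where
  "generic_string_solution t \<nu> N M x lab \<longleftrightarrow>
     string_solution t \<nu> N M x lab \<and>
     (\<forall>a\<in>{1..rk t}. \<forall>(m, \<alpha>, i)\<in>Idx N a.
        ordE (Fplus t \<nu> x a (lab a (m, \<alpha>, i))) = Some (xi_plus t \<nu> a m i) \<and>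
        ordE (Fminus t \<nu> x a (lab a (m, \<alpha>, i))) = Some (xi_minus t \<nu> a m i) \<and>
        ordE (Gplus t M x a (lab a (m, \<alpha>, i))) = oplus (eta_plus t N a m i) (zeta x lab a m \<alpha> i) \<and>
        ordE (Gminus t M x a (lab a (m, \<alpha>, i))) = oplus (eta_minus t N a m i) (zeta x lab a m \<alpha> (i + 1)))"

end

theory Submission imports Defs begin

definition tg :: "int \<Rightarrow> int \<Rightarrow> int \<Rightarrow> int \<Rightarrow> int \<Rightarrow> int \<Rightarrow> int" where
  "tg da db p q u v = min (da * (u + p)) (db * v) - min (da * u) (db * (v + q))"

definition Tsum :: "int \<Rightarrow> int \<Rightarrow> int \<Rightarrow> int \<Rightarrow> int \<Rightarrow> nat \<Rightarrow> int" where
  "Tsum da db p q u k = (\<Sum>j\<in>{1..k}. tg da db p q u (int k + 1 - 2 * int j))"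

lemma Tsum_0: "Tsum da db p q u 0 = 0" by (simp add: Tsum_def)
lemma Tsum_1: "Tsum da db p q u (Suc 0) = tg da db p q u 0" by (simp add: Tsum_def)
lemma Tsum_SS: "Tsum da db p q u (Suc (Suc k)) =
   Tsum da db p q u k + tg da db p q u (int k + 1) + tg da db p q u (- 1 - int k)"
proof -
  have "{1..Suc (Suc k)} = insert 1 (insert (Suc (Suc k)) {Suc 1..Suc k})" by auto
  then have "Tsum da db p q u (Suc (Suc k)) = tg da db p q u (int k + 1) + tg da db p q u (- 1 - int k)
     + (\<Sum>j\<in>{Suc 1..Suc k}. tg da db p q u (int (Suc (Suc k)) + 1 - 2 * int j))"
    by (simp add: Tsum_def algebra_simps)
  also have "(\<Sum>j\<in>{Suc 1..Suc k}. tg da db p q u (int (Suc (Suc k)) + 1 - 2 * int j))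
     = (\<Sum>j\<in>{1..k}. tg da db p q u (int k + 1 - 2 * int j))"
    by (subst sum.shift_bounds_cl_Suc_ivl) (simp add: algebra_simps)
  finally show ?thesis by (simp add: Tsum_def)
qed

lemma two_step: "P 0 \<Longrightarrow> P 1 \<Longrightarrow> (\<And>k. P k \<Longrightarrow> P (Suc (Suc k))) \<Longrightarrow> P (k::nat)"
proof (induction k rule: less_induct)
  case (less k)
  show ?case
  proof (cases k)
    case 0 then show ?thesis using less by simp
  next
    case (Suc j) then show ?thesis using less by (cases j) auto
  qed
qed

lemma T_zero: "Tsum da db 0 0 u k = 0"
  by (simp add: Tsum_def tg_def)

lemma tg_scale: "d > 0 \<Longrightarrow> tg d d p q u v = d * tg 1 1 p q u v"
proof -
  assume d: "d > 0"
  have m: "min (d*x) (d*y) = d * min x y" for x y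
  proof (cases "x \<le> y")
    case True then show ?thesis using d by (simp add: min_def mult_left_mono)
  next
    case False then show ?thesis using d by (simp add: min_def)
  qed
  show ?thesis unfolding tg_def using m[of "u+p" v] m[of u "v+q"] by (simp add: algebra_simps)
qed

lemma Tsum_scale: "d > 0 \<Longrightarrow> Tsum d d p q u k = d * Tsum 1 1 p q u k"
  unfolding Tsum_def sum_distrib_left by (intro sum.cong refl tg_scale)

lemma T_self1_inc: "u \<ge> 1 \<Longrightarrow> - 2 * min u (int k) + (if u = int k then 1 else 0) + tg 1 1 2 2 u (int k + 1) + tg 1 1 2 2 u (- 1 - int k) = - 2 * min u (int (Suc (Suc k))) + (if u = int (Suc (Suc k)) then 1 else 0)"
  unfolding tg_def min_def by (simp split: if_split)

lemma T_self1: "u \<ge> 1 \<Longrightarrow> Tsum 1 1 2 2 u k = - 2 * min u (int k) + (if u = int k then 1 else 0)"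
proof (induction k rule: two_step)
  case 1 then show ?case by (simp add: Tsum_0)
next
  case 2 then show ?case by (simp add: Tsum_1 tg_def min_def)
next
  case (3 k)
  then show ?case using T_self1_inc[of u k] by (simp only: Tsum_SS)
qed

lemma T_adj1_inc: "u \<ge> 1 \<Longrightarrow> min u (int k) + tg 1 1 (-1) (-1) u (int k + 1) + tg 1 1 (-1) (-1) u (- 1 - int k) = min u (int (Suc (Suc k)))"
  unfolding tg_def min_def by (simp split: if_split)

lemma T_adj1: "u \<ge> 1 \<Longrightarrow> Tsum 1 1 (-1) (-1) u k = min u (int k)"
proof (induction k rule: two_step)
  case 1 then show ?case by (simp add: Tsum_0)
next
  case 2 then show ?case by (simp add: Tsum_1 tg_def min_def)
next
  case (3 k)
  then show ?case using T_adj1_inc[of u k] by (simp only: Tsum_SS)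
qed

lemma T_21_inc: "u \<ge> 1 \<Longrightarrow> 2 * min (2*u) (int k) - (if int k = 2*u then 1 else 0) + tg 2 1 (-1) (-2) u (int k + 1) + tg 2 1 (-1) (-2) u (- 1 - int k) = 2 * min (2*u) (int (Suc (Suc k))) - (if int (Suc (Suc k)) = 2*u then 1 else 0)"
  unfolding tg_def min_def by (simp split: if_split)

lemma T_21: "u \<ge> 1 \<Longrightarrow> Tsum 2 1 (-1) (-2) u k = 2 * min (2*u) (int k) - (if int k = 2*u then 1 else 0)"
proof (induction k rule: two_step)
  case 1 then show ?case by (simp add: Tsum_0)
next
  case 2 then show ?case by (simp add: Tsum_1 tg_def min_def)
next
  case (3 k)
  then show ?case using T_21_inc[of u k] by (simp only: Tsum_SS)
qed

lemma T_12_inc: "u \<ge> 1 \<Longrightarrow> min u (2 * int k) + tg 1 2 (-2) (-1) u (int k + 1) + tg 1 2 (-2) (-1) u (- 1 - int k) = min u (2 * int (Suc (Suc k)))"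
  unfolding tg_def min_def by (simp split: if_split)

lemma T_12: "u \<ge> 1 \<Longrightarrow> Tsum 1 2 (-2) (-1) u k = min u (2 * int k)"
proof (induction k rule: two_step)
  case 1 then show ?case by (simp add: Tsum_0)
next
  case 2 then show ?case by (simp add: Tsum_1 tg_def min_def)
next
  case (3 k)
  then show ?case using T_12_inc[of u k] by (simp only: Tsum_SS)
qed

lemma T_31_inc: "u \<ge> 1 \<Longrightarrow> 3 * min (3*u) (int k) - (if int k = 3*u - 1 then 1 else 0) - (if int k = 3*u then 2 else 0) - (if int k = 3*u + 1 then 1 else 0) + tg 3 1 (-1) (-3) u (int k + 1) + tg 3 1 (-1) (-3) u (- 1 - int k) = 3 * min (3*u) (int (Suc (Suc k))) - (if int (Suc (Suc k)) = 3*u - 1 then 1 else 0) - (if int (Suc (Suc k)) = 3*u then 2 else 0) - (if int (Suc (Suc k)) = 3*u + 1 then 1 else 0)"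
  unfolding tg_def min_def by (simp split: if_split)

lemma T_31: "u \<ge> 1 \<Longrightarrow> Tsum 3 1 (-1) (-3) u k = 3 * min (3*u) (int k) - (if int k = 3*u - 1 then 1 else 0) - (if int k = 3*u then 2 else 0) - (if int k = 3*u + 1 then 1 else 0)"
proof (induction k rule: two_step)
  case 1 then show ?case by (simp add: Tsum_0)
next
  case 2 then show ?case by (simp add: Tsum_1 tg_def min_def)
next
  case (3 k)
  then show ?case using T_31_inc[of u k] by (simp only: Tsum_SS)
qed

lemma T_13_inc: "u \<ge> 1 \<Longrightarrow> min u (3 * int k) + tg 1 3 (-3) (-1) u (int k + 1) + tg 1 3 (-3) (-1) u (- 1 - int k) = min u (3 * int (Suc (Suc k)))"
  unfolding tg_def min_def by (simp split: if_split)

lemma T_13: "u \<ge> 1 \<Longrightarrow> Tsum 1 3 (-3) (-1) u k = min u (3 * int k)"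
proof (induction k rule: two_step)
  case 1 then show ?case by (simp add: Tsum_0)
next
  case 2 then show ?case by (simp add: Tsum_1 tg_def min_def)
next
  case (3 k)
  then show ?case using T_13_inc[of u k] by (simp only: Tsum_SS)
qed


definition LHSk :: "afftype \<Rightarrow> nat \<Rightarrow> nat \<Rightarrow> nat \<Rightarrow> nat \<Rightarrow> int" where
  "LHSk t a b U k = int (epsp2 t a b) * Tsum (int (dp t a)) (int (dp t b)) (Ap t a b) (Ap t b a) (int U) k
   + (if is_A2_even t \<and> b = rk t then int (epsp2 t a (rk t + 1)) *
        Tsum (int (dp t a)) (int (dp t (rk t + 1))) (Ap t a (rk t + 1)) (Ap t (rk t + 1) a) (int U) k else 0)"

definition wcond :: "afftype \<Rightarrow> nat \<Rightarrow> nat \<Rightarrow> bool" where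
  "wcond t a b \<longleftrightarrow> tw t = 1 \<and> 1 \<le> b \<and> b \<le> rk t \<and> dc t a > dc t b \<and> dc t b = 1 \<and> Ac t a b \<noteq> 0"

definition Wt :: "afftype \<Rightarrow> nat \<Rightarrow> nat \<Rightarrow> nat \<Rightarrow> nat \<Rightarrow> real" where
  "Wt t a b U k = (if wcond t a b then
      (if dc t a = 2 then (if k = 2 * U then 1 else 0)
       else if dc t a = 3 then (if k = 3 * U - 1 then 1 else 0) + (if k = 3 * U then 1 else 0) + (if k = 3 * U + 1 then 1 else 0)
       else 0) else 0)"

definition RHSk :: "afftype \<Rightarrow> nat \<Rightarrow> nat \<Rightarrow> nat \<Rightarrow> nat \<Rightarrow> real" where
  "RHSk t a b U k = real (epsp t a) * (- (real (dp t a) * (real_of_int (Ac t a b) / real (epsc t a * dp t b)))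
        * real (min (dp t a * U) (dp t b * k)) + (if b = a \<and> k = U then real (dp t a) else 0)) - Wt t a b U k"

definition pairb :: "afftype \<Rightarrow> nat \<Rightarrow> nat \<Rightarrow> bool" where
  "pairb t a b \<longleftrightarrow> (\<forall>U\<ge>1. \<forall>k\<ge>1. real_of_int (LHSk t a b U k) \<le> RHSk t a b U k)"

definition xz :: "afftype \<Rightarrow> nat \<Rightarrow> nat \<Rightarrow> bool" where
  "xz t a b \<longleftrightarrow> (is_A2_even t \<and> b = rk t \<longrightarrow> Ap t a (rk t + 1) = 0 \<and> Ap t (rk t + 1) a = 0)"

lemma LHSk_xz: "xz t a b \<Longrightarrow> LHSk t a b U k = int (epsp2 t a b) * Tsum (int (dp t a)) (int (dp t b)) (Ap t a b) (Ap t b a) (int U) k"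
  by (auto simp: LHSk_def xz_def T_zero)

lemma P_zero:
  assumes "xz t a b" "a \<noteq> b" "Ap t a b = 0" "Ap t b a = 0" "Ac t a b = 0"
  shows "pairb t a b"
  using assms by (auto simp: pairb_def LHSk_xz T_zero RHSk_def Wt_def wcond_def)

lemma P_self:
  assumes "xz t a a" "Ap t a a = 2" "Ac t a a = 2" "epsc t a = 1" "dp t a > 0"
  shows "pairb t a a"
  unfolding pairb_def
proof (intro allI impI)
  fix U k :: nat assume U: "U \<ge> 1" and k: "k \<ge> 1"
  have d: "int (dp t a) > 0" using assms by simp
  define \<delta> :: int where "\<delta> = (if U = k then 1 else 0)"
  have T: "Tsum (int (dp t a)) (int (dp t a)) 2 2 (int U) k = int (dp t a) * (- 2 * int (min U k) + \<delta>)"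
    using U by (simp add: Tsum_scale[OF d] T_self1 \<delta>_def min_def)
  have L: "LHSk t a a U k = int (epsp t a) * (int (dp t a) * (- 2 * int (min U k) + \<delta>))"
    using assms(1,2) by (simp add: LHSk_xz epsp2_def T)
  have m: "min (dp t a * U) (dp t a * k) = dp t a * min U k" by (simp add: min_def)
  have R: "RHSk t a a U k = real (epsp t a) * (- (real (dp t a) * (2 / real (dp t a))) * (real (dp t a) * real (min U k))
      + real (dp t a) * real_of_int \<delta>)"
    unfolding RHSk_def Wt_def wcond_def using assms(3,4) by (simp add: m \<delta>_def)
  have "real (dp t a) * (2 / real (dp t a)) = 2" using assms(5) by simp
  then have R2: "RHSk t a a U k = real (epsp t a) * (real (dp t a) * (- 2 * real (min U k) + real_of_int \<delta>))"
    unfolding R by (simp add: algebra_simps)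
  show "real_of_int (LHSk t a a U k) \<le> RHSk t a a U k"
    unfolding R2 L by simp
qed

lemma P_adj:
  assumes "xz t a b" "a \<noteq> b" "Ap t a b = -1" "Ap t b a = -1" "dp t a = dp t b" "dp t a > 0"
    "int (epsp2 t a b) * int (epsc t a) = int (epsp t a) * (- Ac t a b)" "\<not> wcond t a b" "epsc t a > 0"
  shows "pairb t a b"
  unfolding pairb_def
proof (intro allI impI)
  fix U k :: nat assume U: "U \<ge> 1" and k: "k \<ge> 1"
  have d: "int (dp t a) > 0" using assms by simp
  have T: "Tsum (int (dp t a)) (int (dp t a)) (-1) (-1) (int U) k = int (dp t a) * int (min U k)"
    using U by (simp add: Tsum_scale[OF d] T_adj1 min_def)
  have L: "LHSk t a b U k = int (epsp2 t a b) * (int (dp t a) * int (min U k))"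
    using assms(1,3,4) T unfolding LHSk_xz[OF assms(1)] assms(5)[symmetric] by simp
  have m: "min (dp t a * U) (dp t b * k) = dp t a * min U k" using assms(5) by (simp add: min_def)
  have R: "RHSk t a b U k = real (epsp t a) * (- (real (dp t a) * (real_of_int (Ac t a b) / (real (epsc t a) * real (dp t a))))
        * (real (dp t a) * real (min U k)))"
  proof -
    have m': "real (min (dp t a * U) (dp t b * k)) = real (dp t a) * real (min U k)" using m by simp
    show ?thesis unfolding RHSk_def Wt_def m' using assms(2,8) by (simp add: assms(5)[symmetric])
  qed
  have e: "real (epsp2 t a b) * real (epsc t a) = real (epsp t a) * (- real_of_int (Ac t a b))"
    using arg_cong[OF assms(7), of real_of_int] by simp
  have c: "real (epsc t a) \<noteq> 0" using assms(9) by simp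
  have e2: "real (epsp2 t a b) = real (epsp t a) * (- real_of_int (Ac t a b)) / real (epsc t a)"
    using e c by (simp add: field_simps)
  have R2: "RHSk t a b U k = real (epsp2 t a b) * (real (dp t a) * real (min U k))"
    unfolding R e2 using assms(6,9) by (simp add: field_simps)
  show "real_of_int (LHSk t a b U k) \<le> RHSk t a b U k"
    unfolding R2 L by simp
qed

lemma P_21:
  assumes "xz t a b" "dp t a = 2" "dp t b = 1" "Ap t a b = -1" "Ap t b a = -2" "Ac t a b = -1"
    "epsp2 t a b = 1" "epsp t a = 1" "epsc t a = 1" "wcond t a b" "dc t a = 2"
  shows "pairb t a b"
  unfolding pairb_def
proof (intro allI impI)
  fix U k :: nat assume U: "U \<ge> 1" and k: "k \<ge> 1"
  have ab: "a \<noteq> b" using assms(2,3) by auto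
  have L: "LHSk t a b U k = 2 * int (min (2 * U) k) - (if k = 2 * U then 1 else 0)"
    using assms U by (simp add: LHSk_xz T_21 min_def)
  have R: "RHSk t a b U k = 2 * real (min (2 * U) k) - (if k = 2 * U then 1 else 0)"
    unfolding RHSk_def Wt_def using assms ab by simp
  show "real_of_int (LHSk t a b U k) \<le> RHSk t a b U k" unfolding L R by simp
qed

lemma P_12:
  assumes "xz t a b" "dp t a = 1" "dp t b = 2" "Ap t a b = -2" "Ap t b a = -1" "Ac t a b = -2"
    "epsp2 t a b = 1" "epsp t a = 1" "epsc t a = 1" "\<not> wcond t a b"
  shows "pairb t a b"
  unfolding pairb_def
proof (intro allI impI)
  fix U k :: nat assume U: "U \<ge> 1" and k: "k \<ge> 1"
  have ab: "a \<noteq> b" using assms(2,3) by auto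
  have L: "LHSk t a b U k = int (min U (2 * k))"
    using assms U by (simp add: LHSk_xz T_12 min_def)
  have R: "RHSk t a b U k = real (min U (2 * k))"
    unfolding RHSk_def Wt_def using assms ab by simp
  show "real_of_int (LHSk t a b U k) \<le> RHSk t a b U k" unfolding L R by simp
qed

lemma P_31:
  assumes "xz t a b" "dp t a = 3" "dp t b = 1" "Ap t a b = -1" "Ap t b a = -3" "Ac t a b = -1"
    "epsp2 t a b = 1" "epsp t a = 1" "epsc t a = 1" "wcond t a b" "dc t a = 3"
  shows "pairb t a b"
  unfolding pairb_def
proof (intro allI impI)
  fix U k :: nat assume U: "U \<ge> 1" and k: "k \<ge> 1"
  have ab: "a \<noteq> b" using assms(2,3) by auto
  have e1: "(int k = 3 * int U - 1) = (k = 3 * U - 1)" using U by auto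
  have L: "LHSk t a b U k = 3 * int (min (3 * U) k) - (if k = 3 * U - 1 then 1 else 0)
     - (if k = 3 * U then 2 else 0) - (if k = 3 * U + 1 then 1 else 0)"
    using assms U by (simp add: LHSk_xz T_31 min_def e1)
  have R: "RHSk t a b U k = 3 * real (min (3 * U) k) - ((if k = 3 * U - 1 then 1 else 0)
     + (if k = 3 * U then 1 else 0) + (if k = 3 * U + 1 then 1 else 0))"
    unfolding RHSk_def Wt_def using assms ab by simp
  show "real_of_int (LHSk t a b U k) \<le> RHSk t a b U k" unfolding L R by simp
qed

lemma P_13:
  assumes "xz t a b" "dp t a = 1" "dp t b = 3" "Ap t a b = -3" "Ap t b a = -1" "Ac t a b = -3"
    "epsp2 t a b = 1" "epsp t a = 1" "epsc t a = 1" "\<not> wcond t a b"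
  shows "pairb t a b"
  unfolding pairb_def
proof (intro allI impI)
  fix U k :: nat assume U: "U \<ge> 1" and k: "k \<ge> 1"
  have ab: "a \<noteq> b" using assms(2,3) by auto
  have L: "LHSk t a b U k = int (min U (3 * k))"
    using assms U by (simp add: LHSk_xz T_13 min_def)
  have R: "RHSk t a b U k = real (min U (3 * k))"
    unfolding RHSk_def Wt_def using assms ab by simp
  show "real_of_int (LHSk t a b U k) \<le> RHSk t a b U k" unfolding L R by simp
qed

lemma P_A2e:
  assumes "is_A2_even t" "a = rk t" "Ap t a a = 2" "Ac t a a = 2" "epsc t a = 2"
    "dp t a = 1" "dp t (rk t + 1) = 1" "Ap t a (rk t + 1) = -1" "Ap t (rk t + 1) a = -1"
    "epsp t a = 1" "epsp2 t a (rk t + 1) = 1"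
  shows "pairb t a a"
  unfolding pairb_def
proof (intro allI impI)
  fix U k :: nat assume U: "U \<ge> 1" and k: "k \<ge> 1"
  have L: "LHSk t a a U k = - int (min U k) + (if U = k then 1 else 0)"
    using assms U by (simp add: LHSk_def epsp2_def T_self1 T_adj1 min_def)
  have R: "RHSk t a a U k = - real (min U k) + (if U = k then 1 else 0)"
    unfolding RHSk_def Wt_def wcond_def using assms by auto
  show "real_of_int (LHSk t a a U k) \<le> RHSk t a a U k" unfolding L R by simp
qed


lemma finite_supp: "fin_supp t N \<Longrightarrow> 1 \<le> b \<Longrightarrow> b \<le> rk t \<Longrightarrow> finite (supp N b)"
proof -
  assume f: "fin_supp t N" and b: "1 \<le> b" "b \<le> rk t"
  have "supp N b \<subseteq> snd ` {(a, m). 1 \<le> a \<and> a \<le> rk t \<and> 1 \<le> m \<and> N a m \<noteq> 0}"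
    using b by (auto simp: supp_def image_iff)
  then show ?thesis using f unfolding fin_supp_def by (meson finite_surj)
qed

lemma supp_ge1: "k \<in> supp N b \<Longrightarrow> 1 \<le> k" by (simp add: supp_def)

lemma sum_delta_supp:
  assumes "finite (supp N b)" "c \<ge> 1"
  shows "(\<Sum>k\<in>supp N b. real (N b k) * (if k = c then 1 else 0)) = real (N b c)"
proof -
  have "(\<Sum>k\<in>supp N b. real (N b k) * (if k = c then 1 else 0)) = (\<Sum>k\<in>supp N b. if k = c then real (N b c) else 0)"
    by (rule sum.cong) auto
  also have "\<dots> = (if c \<in> supp N b then real (N b c) else 0)" using assms(1) by (simp add: sum.delta')
  also have "\<dots> = real (N b c)" using assms(2) by (auto simp: supp_def)
  finally show ?thesis .
qed

lemma Wt_nonneg: "Wt t a b U k \<ge> 0" by (simp add: Wt_def)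

lemma Wt_Delta:
  assumes f: "fin_supp t N" and U: "U \<ge> 1" and ea: "tw t = 1 \<Longrightarrow> epsp t a = 1"
  shows "- (\<Sum>b\<in>{1..rk t}. \<Sum>k\<in>supp N b. real (N b k) * Wt t a b U k) \<le> real (epsp t a) * real_of_int (Delta t N a U)"
proof (cases "tw t = 1 \<and> (\<exists>a'. 1 \<le> a' \<and> a' \<le> rk t \<and> dc t a > dc t a' \<and> dc t a' = 1 \<and> Ac t a a' \<noteq> 0)")
  case True
  define a0 where "a0 = (SOME a'. 1 \<le> a' \<and> a' \<le> rk t \<and> dc t a > dc t a' \<and> dc t a' = 1 \<and> Ac t a a' \<noteq> 0)"
  have P: "1 \<le> a0 \<and> a0 \<le> rk t \<and> dc t a > dc t a0 \<and> dc t a0 = 1 \<and> Ac t a a0 \<noteq> 0"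
    unfolding a0_def using True by (metis (mono_tags, lifting) someI_ex)
  have w: "wcond t a a0" using P True by (simp add: wcond_def)
  have fa0: "finite (supp N a0)" using finite_supp[OF f] P by auto
  have D: "Delta t N a U = (if dc t a = 2 then - int (N a0 (2 * U))
               else if dc t a = 3 then - int (N a0 (3 * U - 1) + N a0 (3 * U) + N a0 (3 * U + 1))
               else 0)"
    unfolding Delta_def a0_def[symmetric] using True by (simp add: Let_def)
  have trm: "(\<Sum>k\<in>supp N a0. real (N a0 k) * Wt t a a0 U k) = - real_of_int (Delta t N a U)"
  proof -
    have "(\<Sum>k\<in>supp N a0. real (N a0 k) * Wt t a a0 U k) =
       (if dc t a = 2 then (\<Sum>k\<in>supp N a0. real (N a0 k) * (if k = 2 * U then 1 else 0))
        else if dc t a = 3 then (\<Sum>k\<in>supp N a0. real (N a0 k) * (if k = 3 * U - 1 then 1 else 0))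
           + (\<Sum>k\<in>supp N a0. real (N a0 k) * (if k = 3 * U then 1 else 0))
           + (\<Sum>k\<in>supp N a0. real (N a0 k) * (if k = 3 * U + 1 then 1 else 0)) else 0)"
      using w by (simp add: Wt_def sum.distrib[symmetric] algebra_simps)
    also have "\<dots> = - real_of_int (Delta t N a U)"
      unfolding D using U by (simp add: sum_delta_supp[OF fa0])
    finally show ?thesis .
  qed
  have "(\<Sum>k\<in>supp N a0. real (N a0 k) * Wt t a a0 U k) \<le> (\<Sum>b\<in>{1..rk t}. \<Sum>k\<in>supp N b. real (N b k) * Wt t a b U k)"
    by (rule member_le_sum[where f = "\<lambda>b. \<Sum>k\<in>supp N b. real (N b k) * Wt t a b U k"])
       (use P in \<open>auto intro!: sum_nonneg simp: Wt_nonneg\<close>)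
  then show ?thesis using trm ea True by simp
next
  case False
  then have "Delta t N a U = 0" by (auto simp: Delta_def)
  moreover have "0 \<le> (\<Sum>b\<in>{1..rk t}. \<Sum>k\<in>supp N b. real (N b k) * Wt t a b U k)"
    by (intro sum_nonneg) (simp add: Wt_nonneg)
  ultimately show ?thesis by simp
qed


definition ETD :: "afftype \<Rightarrow> (nat \<Rightarrow> nat \<Rightarrow> nat) \<Rightarrow> nat \<Rightarrow> nat \<Rightarrow> int" where
  "ETD t N a U = (\<Sum>b\<in>{1..ntil t}. \<Sum>k\<in>supp (Next t N) b. int (Next t N b k) *
      (int (epsp2 t a b) * Tsum (int (dp t a)) (int (dp t b)) (Ap t a b) (Ap t b a) (int U) k))"

lemma ETD_eq:
  assumes "1 \<le> rk t"
  shows "ETD t N a U = (\<Sum>b\<in>{1..rk t}. \<Sum>k\<in>supp N b. int (N b k) * LHSk t a b U k)"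
proof (cases "is_A2_even t")
  case False
  then show ?thesis
    by (simp add: ETD_def ntil_def Next_def LHSk_def supp_def)
next
  case True
  let ?n = "rk t"
  let ?T = "\<lambda>b k. int (epsp2 t a b) * Tsum (int (dp t a)) (int (dp t b)) (Ap t a b) (Ap t b a) (int U) k"
  have i: "{1..ntil t} = insert (?n + 1) {1..?n}" using True by (auto simp: ntil_def)
  have s1: "supp (Next t N) (?n + 1) = supp N ?n" using True by (simp add: supp_def Next_def)
  have s2: "b \<in> {1..?n} \<Longrightarrow> supp (Next t N) b = supp N b" for b by (auto simp: supp_def Next_def)
  have inner: "(\<Sum>b\<in>{1..?n}. \<Sum>k\<in>supp (Next t N) b. int (Next t N b k) * ?T b k)
      = (\<Sum>b\<in>{1..?n}. \<Sum>k\<in>supp N b. int (N b k) * ?T b k)"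
    by (rule sum.cong[OF refl]) (simp add: s2 Next_def)
  have "ETD t N a U = (\<Sum>k\<in>supp N ?n. int (N ?n k) * ?T (?n + 1) k)
      + (\<Sum>b\<in>{1..?n}. \<Sum>k\<in>supp N b. int (N b k) * ?T b k)"
    unfolding ETD_def i inner[symmetric] using True s1
    by (subst sum.insert) (auto simp: Next_def)
  also have "(\<Sum>k\<in>supp N ?n. int (N ?n k) * ?T (?n + 1) k)
     = (\<Sum>b\<in>{1..?n}. if b = ?n then (\<Sum>k\<in>supp N b. int (N b k) * ?T (?n + 1) k) else 0)"
    using assms by (simp add: sum.delta')
  also have "(\<Sum>b\<in>{1..?n}. if b = ?n then (\<Sum>k\<in>supp N b. int (N b k) * ?T (?n + 1) k) else 0)
      + (\<Sum>b\<in>{1..?n}. \<Sum>k\<in>supp N b. int (N b k) * ?T b k)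
      = (\<Sum>b\<in>{1..?n}. \<Sum>k\<in>supp N b. int (N b k) * LHSk t a b U k)"
    unfolding sum.distrib[symmetric]
    by (rule sum.cong) (auto simp: LHSk_def True sum.distrib[symmetric] algebra_simps)
  finally show ?thesis .
qed

lemma sum3_lin:
  fixes X Y Z :: "nat \<Rightarrow> nat \<Rightarrow> real"
  shows "(\<Sum>b\<in>B. \<Sum>k\<in>K b. c1 * X b k + c2 * Y b k - Z b k)
   = c1 * (\<Sum>b\<in>B. \<Sum>k\<in>K b. X b k) + c2 * (\<Sum>b\<in>B. \<Sum>k\<in>K b. Y b k) - (\<Sum>b\<in>B. \<Sum>k\<in>K b. Z b k)"
  by (simp add: sum.distrib sum_subtractf sum_distrib_left)

definition S1 :: "afftype \<Rightarrow> (nat \<Rightarrow> nat \<Rightarrow> nat) \<Rightarrow> nat \<Rightarrow> nat \<Rightarrow> real" where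
  "S1 t N a U = (\<Sum>b\<in>{1..rk t}. \<Sum>k\<in>supp N b.
        real_of_int (Ac t a b) / real (epsc t a * dp t b)
        * real (min (dp t a * U) (dp t b * k)) * real (N b k))"

lemma key_general:
  assumes f: "fin_supp t N" and a: "1 \<le> a" "a \<le> rk t" and U: "U \<ge> 1"
    and pairs: "\<And>b. 1 \<le> b \<Longrightarrow> b \<le> rk t \<Longrightarrow> pairb t a b"
    and ea: "tw t = 1 \<Longrightarrow> epsp t a = 1"
  shows "real_of_int (ETD t N a U) \<le> real (epsp t a) * (- real (dp t a) * S1 t N a U + real (dp t a) * real (N a U))
           + real (epsp t a) * real_of_int (Delta t N a U)"
proof -
  have "real_of_int (ETD t N a U) = (\<Sum>b\<in>{1..rk t}. \<Sum>k\<in>supp N b. real (N b k) * real_of_int (LHSk t a b U k))"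
    using a by (simp add: ETD_eq)
  also have "\<dots> \<le> (\<Sum>b\<in>{1..rk t}. \<Sum>k\<in>supp N b. real (N b k) * RHSk t a b U k)"
  proof (intro sum_mono mult_left_mono)
    fix b k assume "b \<in> {1..rk t}" "k \<in> supp N b"
    then show "real_of_int (LHSk t a b U k) \<le> RHSk t a b U k"
      using pairs U by (auto simp: pairb_def supp_def)
  qed simp
  also have "\<dots> = (\<Sum>b\<in>{1..rk t}. \<Sum>k\<in>supp N b.
        real (epsp t a) * (- real (dp t a)) * (real_of_int (Ac t a b) / real (epsc t a * dp t b)
        * real (min (dp t a * U) (dp t b * k)) * real (N b k))
      + real (epsp t a) * real (dp t a) * (real (N b k) * (if b = a \<and> k = U then 1 else 0))
      - real (N b k) * Wt t a b U k)"
    unfolding RHSk_def by (intro sum.cong refl) (simp add: algebra_simps)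
  also have "\<dots> = real (epsp t a) * (- real (dp t a)) * S1 t N a U
      + real (epsp t a) * real (dp t a) * (\<Sum>b\<in>{1..rk t}. \<Sum>k\<in>supp N b. real (N b k) * (if b = a \<and> k = U then 1 else 0))
      - (\<Sum>b\<in>{1..rk t}. \<Sum>k\<in>supp N b. real (N b k) * Wt t a b U k)"
    unfolding S1_def by (rule sum3_lin)
  also have "(\<Sum>b\<in>{1..rk t}. \<Sum>k\<in>supp N b. real (N b k) * (if b = a \<and> k = U then 1 else 0)) = real (N a U)"
  proof -
    have "(\<Sum>b\<in>{1..rk t}. \<Sum>k\<in>supp N b. real (N b k) * (if b = a \<and> k = U then 1 else 0))
       = (\<Sum>b\<in>{1..rk t}. if b = a then (\<Sum>k\<in>supp N b. real (N b k) * (if k = U then 1 else 0)) else 0)"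
      by (intro sum.cong refl) auto
    also have "\<dots> = (\<Sum>k\<in>supp N a. real (N a k) * (if k = U then 1 else 0))"
      using a by (simp add: sum.delta')
    also have "\<dots> = real (N a U)" using sum_delta_supp[OF finite_supp[OF f a] U] .
    finally show ?thesis .
  qed
  finally show ?thesis using Wt_Delta[OF f U ea] by (simp add: algebra_simps)
qed

lemma eta_diff:
  assumes "int m + 1 - 2 * int i = int U"
  shows "eta_plus t N a m i - eta_minus t N a m i = int (kappa0 t) * ETD t N a U"
  unfolding eta_plus_def eta_minus_def ETD_def assms right_diff_distrib[symmetric]
      sum_subtractf[symmetric]
  by (intro arg_cong[where f="\<lambda>x. int (kappa0 t) * x"] sum.cong refl)
     (simp add: Tsum_def tg_def sum_distrib_left right_diff_distrib)

lemma xi_diff: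
  assumes "int m + 1 - 2 * int i = int U" "U \<ge> 1"
  shows "real_of_int (xi_minus t \<nu> a m i - xi_plus t \<nu> a m i) = real (kappa0 t * epsp t a * dp t a) * gam \<nu> a U"
proof -
  have "xi_plus t \<nu> a m i = 0"
    unfolding xi_plus_def assms(1) by (auto intro!: sum.neutral simp: supp_def)
  moreover have "real_of_int (xi_minus t \<nu> a m i) = real (kappa0 t * epsp t a * dp t a) * gam \<nu> a U"
    unfolding xi_minus_def assms(1) gam_def
    by (simp add: sum_distrib_left) (auto intro!: sum.cong simp: min_def)
  ultimately show ?thesis by simp
qed


lemma bnd:
  assumes f: "fin_supp t N" and a: "1 \<le> a" "a \<le> rk t"
    and pairs: "\<And>b. 1 \<le> b \<Longrightarrow> b \<le> rk t \<Longrightarrow> pairb t a b"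
    and ea: "tw t = 1 \<Longrightarrow> epsp t a = 1"
    and e: "int m + 1 - 2 * int i = int U" and U: "U \<ge> 1"
  shows "real_of_int (- (xi_plus t \<nu> a m i - xi_minus t \<nu> a m i + eta_minus t N a m i - eta_plus t N a m i))
     \<le> real (kappa0 t * epsp t a) * (real (dp t a) * (vacP t \<nu> N a U + real (N a U)) + real_of_int (Delta t N a U))"
proof -
  have "real_of_int (- (xi_plus t \<nu> a m i - xi_minus t \<nu> a m i + eta_minus t N a m i - eta_plus t N a m i))
      = real_of_int (xi_minus t \<nu> a m i - xi_plus t \<nu> a m i) + real_of_int (eta_plus t N a m i - eta_minus t N a m i)"
    by simp
  also have "\<dots> = real (kappa0 t * epsp t a * dp t a) * gam \<nu> a U + real (kappa0 t) * real_of_int (ETD t N a U)"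
    using xi_diff[OF e U] eta_diff[OF e] by simp
  also have "\<dots> \<le> real (kappa0 t * epsp t a * dp t a) * gam \<nu> a U + real (kappa0 t) *
       (real (epsp t a) * (- real (dp t a) * S1 t N a U + real (dp t a) * real (N a U))
           + real (epsp t a) * real_of_int (Delta t N a U))"
    using key_general[OF f a U pairs ea] by (intro add_left_mono mult_left_mono) auto
  also have "\<dots> = real (kappa0 t * epsp t a) * (real (dp t a) * (vacP t \<nu> N a U + real (N a U)) + real_of_int (Delta t N a U))"
    unfolding vacP_def S1_def by (simp add: algebra_simps)
  finally show ?thesis .
qed

lemma zeta_pos_aux:
  fixes f g :: "complex fls"
  assumes "f \<noteq> 0" "g \<noteq> 0" "lcoeff f = lcoeff g" "ordE (fls_base_factor f - fls_base_factor g) = Some z"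
  shows "z > 0"
proof -
  let ?h = "fls_base_factor f - fls_base_factor g"
  have h0: "?h \<noteq> 0" and z: "z = fls_subdegree ?h" using assms(4) by (auto simp: ordE_def split: if_splits)
  have neg: "fls_nth ?h k = 0" if "k < 0" for k
    using that by (simp add: fls_base_factor_nth)
  have ge: "0 \<le> fls_subdegree ?h" by (rule fls_subdegree_ge0I) (use neg in auto)
  have "fls_nth ?h 0 = 0" using assms(3) by (simp add: lcoeff_def)
  moreover have "fls_nth ?h (fls_subdegree ?h) \<noteq> 0" by (rule nth_fls_subdegree_nonzero[OF h0])
  ultimately have "fls_subdegree ?h \<noteq> 0" by auto
  then show ?thesis using ge z by simp
qed

lemma string_facts:
  assumes gen: "generic_string_solution t \<nu> N M x lab" and a: "a \<in> {1..rk t}" and idx: "(m, \<alpha>, j) \<in> Idx N a"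
  shows "\<exists>z1 z2. zeta x lab a m \<alpha> j = Some z1 \<and> zeta x lab a m \<alpha> (j + 1) = Some z2 \<and>
     xi_plus t \<nu> a m j + eta_minus t N a m j + z2 = xi_minus t \<nu> a m j + eta_plus t N a m j + z1"
proof -
  let ?l = "lab a (m, \<alpha>, j)"
  have ss: "string_solution t \<nu> N M x lab" using gen by (simp add: generic_string_solution_def)
  have "bij_betw (lab a) (Idx N a) {1..M a}" using ss a by (simp add: string_solution_def)
  then have l: "?l \<in> {1..M a}" using idx by (meson bij_betwE)
  have eq: "Fplus t \<nu> x a ?l * Gminus t M x a ?l = Fminus t \<nu> x a ?l * Gplus t M x a ?l"
    using ss a l by (simp add: string_solution_def bethe_def)
  have nz: "Fplus t \<nu> x a ?l * Gminus t M x a ?l \<noteq> 0"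
    using ss a l by (simp add: string_solution_def)
  have o: "ordE (Fplus t \<nu> x a ?l) = Some (xi_plus t \<nu> a m j)"
     "ordE (Fminus t \<nu> x a ?l) = Some (xi_minus t \<nu> a m j)"
     "ordE (Gplus t M x a ?l) = oplus (eta_plus t N a m j) (zeta x lab a m \<alpha> j)"
     "ordE (Gminus t M x a ?l) = oplus (eta_minus t N a m j) (zeta x lab a m \<alpha> (j + 1))"
    using gen a idx unfolding generic_string_solution_def by fastforce+
  have n1: "Fplus t \<nu> x a ?l \<noteq> 0" "Gminus t M x a ?l \<noteq> 0" using nz by auto
  have n2: "Fminus t \<nu> x a ?l \<noteq> 0" "Gplus t M x a ?l \<noteq> 0" using nz eq by auto
  obtain z1 where z1: "zeta x lab a m \<alpha> j = Some z1"
    "fls_subdegree (Gplus t M x a ?l) = eta_plus t N a m j + z1"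
    using o(3) n2(2) by (cases "zeta x lab a m \<alpha> j") (auto simp: ordE_def oplus_def)
  obtain z2 where z2: "zeta x lab a m \<alpha> (j + 1) = Some z2"
    "fls_subdegree (Gminus t M x a ?l) = eta_minus t N a m j + z2"
    using o(4) n1(2) by (cases "zeta x lab a m \<alpha> (j + 1)") (auto simp: ordE_def oplus_def)
  have "fls_subdegree (Fplus t \<nu> x a ?l * Gminus t M x a ?l) = fls_subdegree (Fminus t \<nu> x a ?l * Gplus t M x a ?l)"
    using eq by simp
  then have "fls_subdegree (Fplus t \<nu> x a ?l) + fls_subdegree (Gminus t M x a ?l)
      = fls_subdegree (Fminus t \<nu> x a ?l) + fls_subdegree (Gplus t M x a ?l)"
    using n1 n2 by simp
  moreover have "fls_subdegree (Fplus t \<nu> x a ?l) = xi_plus t \<nu> a m j"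
    "fls_subdegree (Fminus t \<nu> x a ?l) = xi_minus t \<nu> a m j"
    using o(1,2) n1 n2 by (auto simp: ordE_def)
  ultimately show ?thesis using z1 z2 by auto
qed

lemma zeta_pos:
  assumes gen: "generic_string_solution t \<nu> N M x lab" and a: "a \<in> {1..rk t}"
    and idx: "(m, \<alpha>, j) \<in> Idx N a" and j: "2 \<le> j" and z: "zeta x lab a m \<alpha> j = Some z"
  shows "z > 0"
proof -
  have ss: "string_solution t \<nu> N M x lab" using gen by (simp add: generic_string_solution_def)
  have idx2: "(m, \<alpha>, j - 1) \<in> Idx N a" using idx j by (auto simp: Idx_def)
  have P: "\<And>p. p \<in> Idx N a \<Longrightarrow> (case p of (m, \<alpha>, i) \<Rightarrow> x a (lab a (m, \<alpha>, i)) \<noteq> 0 \<and>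
        lcoeff (x a (lab a (m, \<alpha>, i))) = lcoeff (x a (lab a (m, \<alpha>, 1))))"
    using ss a unfolding string_solution_def by blast
  have A: "x a (lab a (m, \<alpha>, j)) \<noteq> 0" "lcoeff (x a (lab a (m, \<alpha>, j))) = lcoeff (x a (lab a (m, \<alpha>, 1)))"
    using P[OF idx] by auto
  have B: "x a (lab a (m, \<alpha>, j - 1)) \<noteq> 0" "lcoeff (x a (lab a (m, \<alpha>, j - 1))) = lcoeff (x a (lab a (m, \<alpha>, 1)))"
    using P[OF idx2] by auto
  have jm: "j \<le> m" using idx by (simp add: Idx_def)
  have "ordE (fls_base_factor (x a (lab a (m, \<alpha>, j))) - fls_base_factor (x a (lab a (m, \<alpha>, j - 1)))) = Some z"
    using z j jm by (simp add: zeta_def)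
  then show ?thesis using zeta_pos_aux A B by metis
qed



lemma pair_dispatch:
  assumes "(xz t a b \<and> a \<noteq> b \<and> Ap t a b = 0 \<and> Ap t b a = 0 \<and> Ac t a b = 0)
   \<or> (xz t a b \<and> a = b \<and> Ap t a a = 2 \<and> Ac t a a = 2 \<and> epsc t a = 1 \<and> dp t a > 0)
   \<or> (xz t a b \<and> a \<noteq> b \<and> Ap t a b = -1 \<and> Ap t b a = -1 \<and> dp t a = dp t b \<and> dp t a > 0 \<and>
        int (epsp2 t a b) * int (epsc t a) = int (epsp t a) * (- Ac t a b) \<and> \<not> wcond t a b \<and> epsc t a > 0)
   \<or> (xz t a b \<and> dp t a = 2 \<and> dp t b = 1 \<and> Ap t a b = -1 \<and> Ap t b a = -2 \<and> Ac t a b = -1 \<and>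
        epsp2 t a b = 1 \<and> epsp t a = 1 \<and> epsc t a = 1 \<and> wcond t a b \<and> dc t a = 2)
   \<or> (xz t a b \<and> dp t a = 1 \<and> dp t b = 2 \<and> Ap t a b = -2 \<and> Ap t b a = -1 \<and> Ac t a b = -2 \<and>
        epsp2 t a b = 1 \<and> epsp t a = 1 \<and> epsc t a = 1 \<and> \<not> wcond t a b)
   \<or> (xz t a b \<and> dp t a = 3 \<and> dp t b = 1 \<and> Ap t a b = -1 \<and> Ap t b a = -3 \<and> Ac t a b = -1 \<and>
        epsp2 t a b = 1 \<and> epsp t a = 1 \<and> epsc t a = 1 \<and> wcond t a b \<and> dc t a = 3)
   \<or> (xz t a b \<and> dp t a = 1 \<and> dp t b = 3 \<and> Ap t a b = -3 \<and> Ap t b a = -1 \<and> Ac t a b = -3 \<and>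
        epsp2 t a b = 1 \<and> epsp t a = 1 \<and> epsc t a = 1 \<and> \<not> wcond t a b)
   \<or> (is_A2_even t \<and> a = rk t \<and> b = a \<and> Ap t a a = 2 \<and> Ac t a a = 2 \<and> epsc t a = 2 \<and>
    dp t a = 1 \<and> dp t (rk t + 1) = 1 \<and> Ap t a (rk t + 1) = -1 \<and> Ap t (rk t + 1) a = -1 \<and>
    epsp t a = 1 \<and> epsp2 t a (rk t + 1) = 1)"
  shows "pairb t a b"
  using assms
  apply (elim disjE conjE)
         apply (erule (4) P_zero)
        apply (metis P_self)
       apply (erule (8) P_adj)
      apply (erule (10) P_21)
     apply (erule (9) P_12)
    apply (erule (10) P_31)
   apply (erule (9) P_13)
  apply (metis P_A2e)
  done

lemmas dsimps = Ap_def Ac_def dp_def dc_def epsp_def epsc_def epsp2_def wcond_def xz_def chain_adj_def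

lemma pair_B: assumes "3 \<le> n" "1 \<le> a" "a \<le> n" "1 \<le> b" "b \<le> n" shows "pairb (B1 n) a b"
proof -
  consider "a = b" | "b = a + 1" "b = n" | "b = a + 1" "b < n" | "a = b + 1" "a = n" | "a = b + 1" "a < n"
    | "a \<noteq> b" "b \<noteq> a + 1" "a \<noteq> b + 1" using assms by linarith
  then show ?thesis
  proof cases
    case 1 then show ?thesis using assms by (intro pair_dispatch) (simp add: dsimps; arith?)
  next
    case 2 then show ?thesis using assms by (intro pair_dispatch) (simp add: dsimps; arith?)
  next
    case 3 then show ?thesis using assms by (intro pair_dispatch) (simp add: dsimps; arith?)
  next
    case 4 then show ?thesis using assms by (intro pair_dispatch) (simp add: dsimps; arith?)
  next
    case 5 then show ?thesis using assms by (intro pair_dispatch) (simp add: dsimps; arith?)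
  next
    case 6 then show ?thesis using assms by (intro pair_dispatch) (simp add: dsimps; arith?)
  qed
qed


lemma ea_lemma: "tw t = 1 \<Longrightarrow> epsp t a = 1"
  by (cases t) (auto simp: epsp_def)

lemma epsp_pos: "epsp t a > 0"
  by (cases t) (auto simp: epsp_def)

lemma kappa0_pos: "kappa0 t > 0"
  by (simp add: kappa0_def)



lemma pair_A: assumes "1 \<le> n" "1 \<le> a" "a \<le> n" "1 \<le> b" "b \<le> n" shows "pairb (A1 n) a b"
proof -
  consider "a = b" | "b = a + 1" | "a = b + 1" | "a \<noteq> b" "b \<noteq> a + 1" "a \<noteq> b + 1" by linarith
  then show ?thesis
  proof cases
    case 1 then show ?thesis using assms by (intro pair_dispatch) (simp add: dsimps; arith?)
  next
    case 2 then show ?thesis using assms by (intro pair_dispatch) (simp add: dsimps; arith?)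
  next
    case 3 then show ?thesis using assms by (intro pair_dispatch) (simp add: dsimps; arith?)
  next
    case 4 then show ?thesis using assms by (intro pair_dispatch) (simp add: dsimps; arith?)
  qed
qed




lemma pair_C: assumes "2 \<le> n" "1 \<le> a" "a \<le> n" "1 \<le> b" "b \<le> n" shows "pairb (C1 n) a b"
proof -
  consider "a = b" | "b = a + 1" "b = n" | "b = a + 1" "b < n" | "a = b + 1" "a = n" | "a = b + 1" "a < n"
    | "a \<noteq> b" "b \<noteq> a + 1" "a \<noteq> b + 1" using assms by linarith
  then show ?thesis
  proof cases
    case 1 then show ?thesis using assms by (intro pair_dispatch) (simp add: dsimps; arith?)
  next
    case 2 then show ?thesis using assms by (intro pair_dispatch) (simp add: dsimps; arith?)
  next
    case 3 then show ?thesis using assms by (intro pair_dispatch) (simp add: dsimps; arith?)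
  next
    case 4 then show ?thesis using assms by (intro pair_dispatch) (simp add: dsimps; arith?)
  next
    case 5 then show ?thesis using assms by (intro pair_dispatch) (simp add: dsimps; arith?)
  next
    case 6 then show ?thesis using assms by (intro pair_dispatch) (simp add: dsimps; arith?)
  qed
qed




lemma pair_D: assumes "4 \<le> n" "1 \<le> a" "a \<le> n" "1 \<le> b" "b \<le> n" shows "pairb (D1 n) a b"
proof -
  consider "a = b" | "b = a + 1" "b \<le> n - 1" | "a = b + 1" "a \<le> n - 1" | "a = n - 2" "b = n" | "a = n" "b = n - 2"
    | "a \<noteq> b" "\<not> (b = a + 1 \<and> b \<le> n - 1)" "\<not> (a = b + 1 \<and> a \<le> n - 1)" "\<not> (a = n - 2 \<and> b = n)" "\<not> (a = n \<and> b = n - 2)"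
    by blast
  then show ?thesis
  proof cases
    case 1 then show ?thesis using assms by (intro pair_dispatch) (simp add: dsimps doubleton_eq_iff; arith?)
  next
    case 2 then show ?thesis using assms by (intro pair_dispatch) (simp add: dsimps doubleton_eq_iff; arith?)
  next
    case 3 then show ?thesis using assms by (intro pair_dispatch) (simp add: dsimps doubleton_eq_iff; arith?)
  next
    case 4 then show ?thesis using assms by (intro pair_dispatch) (simp add: dsimps doubleton_eq_iff; arith?)
  next
    case 5 then show ?thesis using assms by (intro pair_dispatch) (simp add: dsimps doubleton_eq_iff; arith?)
  next
    case 6 then show ?thesis using assms by (intro pair_dispatch) (simp add: dsimps doubleton_eq_iff; arith?)
  qed
qed




lemma pair_E6: assumes "1 \<le> a" "a \<le> 6" "1 \<le> b" "b \<le> 6" shows "pairb E6_1 a b"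
proof -
  have "a \<in> {1,2,3,4,5,6}" "b \<in> {1,2,3,4,5,6}" using assms by auto
  then show ?thesis by (elim insertE emptyE; intro pair_dispatch; simp add: dsimps E_adj_def doubleton_eq_iff)
qed




lemma pair_E7: assumes "1 \<le> a" "a \<le> 7" "1 \<le> b" "b \<le> 7" shows "pairb E7_1 a b"
proof -
  have "a \<in> {1,2,3,4,5,6,7}" "b \<in> {1,2,3,4,5,6,7}" using assms by auto
  then show ?thesis by (elim insertE emptyE; intro pair_dispatch; simp add: dsimps E_adj_def doubleton_eq_iff)
qed




lemma pair_E8: assumes "1 \<le> a" "a \<le> 8" "1 \<le> b" "b \<le> 8" shows "pairb E8_1 a b"
proof -
  have "a \<in> {1,2,3,4,5,6,7,8}" "b \<in> {1,2,3,4,5,6,7,8}" using assms by auto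
  then show ?thesis by (elim insertE emptyE; intro pair_dispatch; simp add: dsimps E_adj_def doubleton_eq_iff)
qed




lemma pair_F4: assumes "1 \<le> a" "a \<le> 4" "1 \<le> b" "b \<le> 4" shows "pairb F4_1 a b"
proof -
  have "a \<in> {1,2,3,4}" "b \<in> {1,2,3,4}" using assms by auto
  then show ?thesis by (elim insertE emptyE; intro pair_dispatch; simp add: dsimps)
qed




lemma pair_G2: assumes "1 \<le> a" "a \<le> 2" "1 \<le> b" "b \<le> 2" shows "pairb G2_1 a b"
proof -
  have "a \<in> {1,2}" "b \<in> {1,2}" using assms by auto
  then show ?thesis by (elim insertE emptyE; intro pair_dispatch; simp add: dsimps)
qed




lemma pair_E62: assumes "1 \<le> a" "a \<le> 4" "1 \<le> b" "b \<le> 4" shows "pairb E6_2 a b"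
proof -
  have "a \<in> {1,2,3,4}" "b \<in> {1,2,3,4}" using assms by auto
  then show ?thesis by (elim insertE emptyE; intro pair_dispatch; simp add: dsimps E_adj_def doubleton_eq_iff)
qed




lemma pair_D43: assumes "1 \<le> a" "a \<le> 2" "1 \<le> b" "b \<le> 2" shows "pairb D4_3 a b"
proof -
  have "a \<in> {1,2}" "b \<in> {1,2}" using assms by auto
  then show ?thesis by (elim insertE emptyE; intro pair_dispatch; simp add: dsimps doubleton_eq_iff)
qed




lemma dp_tw: "tw t \<noteq> 1 \<Longrightarrow> dp t a = 1" by (simp add: dp_def)

lemma epsp_A2o: "epsp (A2_odd n) a = (if a = n then 2 else 1)"
  by (simp add: epsp_def) arith

lemma epsc_A2o: "1 \<le> a \<Longrightarrow> a \<le> n \<Longrightarrow> epsc (A2_odd n) a = 1"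
  by (simp add: epsc_def Ap_def chain_adj_def; presburger)

lemmas dA2o = Ap_def Ac_def dp_def dc_def epsp_A2o epsc_A2o epsp2_def wcond_def xz_def chain_adj_def

lemma pair_A2o: assumes "2 \<le> n" "1 \<le> a" "a \<le> n" "1 \<le> b" "b \<le> n" shows "pairb (A2_odd n) a b"
proof -
  consider "a = b" | "b = a + 1" "b = n" | "b = a + 1" "b < n" | "a = b + 1" "a = n" | "a = b + 1" "a < n"
    | "a \<noteq> b" "b \<noteq> a + 1" "a \<noteq> b + 1" using assms by linarith
  then show ?thesis
  proof cases
    case 1 then show ?thesis using assms by (intro pair_dispatch) (simp add: dA2o; arith?)
  next
    case 2 then show ?thesis using assms by (intro pair_dispatch) (simp add: dA2o; arith?)
  next
    case 3 then show ?thesis using assms by (intro pair_dispatch) (simp add: dA2o; arith?)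
  next
    case 4 then show ?thesis using assms by (intro pair_dispatch) (simp add: dA2o; arith?)
  next
    case 5 then show ?thesis using assms by (intro pair_dispatch) (simp add: dA2o; arith?)
  next
    case 6 then show ?thesis using assms by (intro pair_dispatch) (simp add: dA2o; arith?)
  qed
qed

lemma epsp_D2: "a \<le> n \<Longrightarrow> epsp (D2 n) a = (if a = n then 1 else 2)"
  by (simp add: epsp_def)

lemma Ap_D2: "2 \<le> n \<Longrightarrow> a \<le> n \<Longrightarrow> b \<le> n \<Longrightarrow>
   Ap (D2 n) a b = (if a = b then 2 else if chain_adj a b then -1 else 0)"
  by (auto simp: Ap_def doubleton_eq_iff)

lemma epsc_D2: "1 \<le> a \<Longrightarrow> a \<le> n \<Longrightarrow> 2 \<le> n \<Longrightarrow> epsc (D2 n) a = 1"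
  by (simp add: epsc_def Ap_def chain_adj_def doubleton_eq_iff; arith)

lemmas dD2 = Ap_D2 Ac_def dp_def dc_def epsp_D2 epsc_D2 epsp2_def wcond_def xz_def chain_adj_def

lemma pair_D2: assumes "2 \<le> n" "1 \<le> a" "a \<le> n" "1 \<le> b" "b \<le> n" shows "pairb (D2 n) a b"
proof -
  consider "a = b" | "b = a + 1" "b = n" | "b = a + 1" "b < n" | "a = b + 1" "a = n" | "a = b + 1" "a < n"
    | "a \<noteq> b" "b \<noteq> a + 1" "a \<noteq> b + 1" using assms by linarith
  then show ?thesis
  proof cases
    case 1 then show ?thesis using assms by (intro pair_dispatch) (simp add: dD2; arith?)
  next
    case 2 then show ?thesis using assms by (intro pair_dispatch) (simp add: dD2; arith?)
  next
    case 3 then show ?thesis using assms by (intro pair_dispatch) (simp add: dD2; arith?)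
  next
    case 4 then show ?thesis using assms by (intro pair_dispatch) (simp add: dD2; arith?)
  next
    case 5 then show ?thesis using assms by (intro pair_dispatch) (simp add: dD2; arith?)
  next
    case 6 then show ?thesis using assms by (intro pair_dispatch) (simp add: dD2; arith?)
  qed
qed

lemma epsp_A2e: "epsp (A2_even n) a = 1"
  by (simp add: epsp_def) arith

lemma epsc_A2e: "1 \<le> a \<Longrightarrow> a \<le> n \<Longrightarrow> epsc (A2_even n) a = (if a = n then 2 else 1)"
  by (simp add: epsc_def Ap_def chain_adj_def) presburger

lemmas dA2e = Ap_def Ac_def dp_def dc_def epsp_A2e epsc_A2e epsp2_def wcond_def xz_def chain_adj_def

lemma pair_A2e: assumes "1 \<le> n" "1 \<le> a" "a \<le> n" "1 \<le> b" "b \<le> n" shows "pairb (A2_even n) a b"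
proof -
  consider "a = b" "a = n" | "a = b" "a < n" | "b = a + 1" "b = n" | "b = a + 1" "b < n" | "a = b + 1" "a = n" | "a = b + 1" "a < n"
    | "a \<noteq> b" "b \<noteq> a + 1" "a \<noteq> b + 1" using assms by linarith
  then show ?thesis
  proof cases
    case 1 then show ?thesis using assms by (intro pair_dispatch) (simp add: dA2e; arith?)
  next
    case 2 then show ?thesis using assms by (intro pair_dispatch) (simp add: dA2e; arith?)
  next
    case 3 then show ?thesis using assms by (intro pair_dispatch) (simp add: dA2e; arith?)
  next
    case 4 then show ?thesis using assms by (intro pair_dispatch) (simp add: dA2e; arith?)
  next
    case 5 then show ?thesis using assms by (intro pair_dispatch) (simp add: dA2e; arith?)
  next
    case 6 then show ?thesis using assms by (intro pair_dispatch) (simp add: dA2e; arith?)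
  next
    case 7 then show ?thesis using assms by (intro pair_dispatch) (simp add: dA2e; arith?)
  qed
qed


lemma pair_all:
  assumes v: "valid_type t" and ab: "1 \<le> a" "a \<le> rk t" "1 \<le> b" "b \<le> rk t"
  shows "pairb t a b"
proof (cases t)
  case (A1 n) then show ?thesis using v ab pair_A[of n a b] by simp
next
  case (B1 n) then show ?thesis using v ab pair_B[of n a b] by simp
next
  case (C1 n) then show ?thesis using v ab pair_C[of n a b] by simp
next
  case (D1 n) then show ?thesis using v ab pair_D[of n a b] by simp
next
  case E6_1 then show ?thesis using v ab pair_E6[of a b] by simp
next
  case E7_1 then show ?thesis using v ab pair_E7[of a b] by simp
next
  case E8_1 then show ?thesis using v ab pair_E8[of a b] by simp
next
  case F4_1 then show ?thesis using v ab pair_F4[of a b] by simp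
next
  case G2_1 then show ?thesis using v ab pair_G2[of a b] by simp
next
  case (A2_even n) then show ?thesis using v ab pair_A2e[of n a b] by simp
next
  case (A2_odd n) then show ?thesis using v ab pair_A2o[of n a b] by simp
next
  case (D2 n) then show ?thesis using v ab pair_D2[of n a b] by simp
next
  case E6_2 then show ?thesis using v ab pair_E62[of a b] by simp
next
  case D4_3 then show ?thesis using v ab pair_D43[of a b] by simp
qed

theorem proposition2p6:
  fixes t :: afftype and \<nu> N :: "nat \<Rightarrow> nat \<Rightarrow> nat" and M :: "nat \<Rightarrow> nat"
  assumes "valid_type t"
    and "fin_supp t \<nu>" and "fin_supp t N"
    and "\<forall>a\<in>{1..rk t}. M a = (\<Sum>m\<in>supp N a. m * N a m)"
    and "\<exists>x lab. generic_string_solution t \<nu> N M x lab"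
  shows "\<forall>a\<in>{1..rk t}. \<forall>m \<ge> 1. N a m > 0 \<longrightarrow>
           (\<forall>\<alpha>\<in>{1..N a m}. \<forall>i\<in>{2..m}.
              (\<Sum>k = 1..min (i - 1) (m + 1 - i).
                 real (dp t a) * (vacP t \<nu> N a (m + 1 - 2 * k) + real (N a (m + 1 - 2 * k)))
                 + real_of_int (Delta t N a (m + 1 - 2 * k))) > 0)"
proof (intro ballI allI impI)
  fix a m \<alpha> i
  assume a: "a \<in> {1..rk t}" and m: "1 \<le> m" and Nm: "N a m > 0" and al: "\<alpha> \<in> {1..N a m}" and i: "i \<in> {2..m}"
  obtain x lab where gen: "generic_string_solution t \<nu> N M x lab" using assms(5) by blast
  define zz where "zz j = the (zeta x lab a m \<alpha> j)" for j
  define Qv where "Qv j = xi_plus t \<nu> a m j - xi_minus t \<nu> a m j + eta_minus t N a m j - eta_plus t N a m j" for j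
  define E where "E k = real (dp t a) * (vacP t \<nu> N a (m + 1 - 2 * k) + real (N a (m + 1 - 2 * k)))
                 + real_of_int (Delta t N a (m + 1 - 2 * k))" for k
  define K where "K = real (kappa0 t * epsp t a)"
  have K: "K > 0" unfolding K_def using epsp_pos kappa0_pos by simp
  have idx: "j \<in> {1..m} \<Longrightarrow> (m, \<alpha>, j) \<in> Idx N a" for j using m Nm al by (auto simp: Idx_def)
  have rec: "zz (k + 1) - zz k = - Qv k" if kk: "k \<in> {1..m}" for k
  proof -
    obtain z1 z2 where "zeta x lab a m \<alpha> k = Some z1" "zeta x lab a m \<alpha> (k + 1) = Some z2"
      "xi_plus t \<nu> a m k + eta_minus t N a m k + z2 = xi_minus t \<nu> a m k + eta_plus t N a m k + z1"
      using string_facts[OF gen a idx[OF kk]] by blast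
    then show ?thesis by (simp add: zz_def Qv_def)
  qed
  have z1: "zz 1 = 0" by (simp add: zz_def zeta_def)
  have zpos: "zz j > 0" if jj: "2 \<le> j" "j \<le> m" for j
  proof -
    obtain z1 z2 where "zeta x lab a m \<alpha> j = Some z1"
      using string_facts[OF gen a idx[of j]] jj by auto
    then show ?thesis using zeta_pos[OF gen a idx[of j]] jj by (simp add: zz_def)
  qed
  define L where "L = min (i - 1) (m + 1 - i)"
  have L: "1 \<le> L" "L + 1 \<le> m" "2 * L \<le> m" using i unfolding L_def by auto
  have "(\<Sum>k = 1..L. real_of_int (zz (Suc k) - zz k)) = real_of_int (zz (Suc L) - zz 1)"
    using sum_Suc_diff[of 1 L "\<lambda>k. real_of_int (zz k)"] L by simp
  also have "\<dots> > 0" using zpos[of "Suc L"] L z1 by simp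
  also have "(\<Sum>k = 1..L. real_of_int (zz (Suc k) - zz k)) = (\<Sum>k = 1..L. real_of_int (- Qv k))"
  proof (rule sum.cong[OF refl])
    fix k assume "k \<in> {1..L}"
    then have "k \<in> {1..m}" using L by auto
    then show "real_of_int (zz (Suc k) - zz k) = real_of_int (- Qv k)" using rec by simp
  qed
  finally have pos: "(\<Sum>k = 1..L. real_of_int (- Qv k)) > 0" .
  have "(\<Sum>k = 1..L. real_of_int (- Qv k)) \<le> (\<Sum>k = 1..L. K * E k)"
  proof (rule sum_mono)
    fix k assume k: "k \<in> {1..L}"
    have e: "int m + 1 - 2 * int k = int (m + 1 - 2 * k)" using k L by auto
    have U: "m + 1 - 2 * k \<ge> 1" using k L by auto
    show "real_of_int (- Qv k) \<le> K * E k"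
      unfolding Qv_def K_def E_def
      using bnd[OF assms(3) _ _ pair_all[OF assms(1)] ea_lemma e U, of a \<nu>] a by auto
  qed
  then have "(\<Sum>k = 1..L. K * E k) > 0" using pos by linarith
  then have "K * (\<Sum>k = 1..L. E k) > 0" by (simp add: sum_distrib_left)
  then have "(\<Sum>k = 1..L. E k) > 0" using K by (simp add: zero_less_mult_iff)
  then show "(\<Sum>k = 1..min (i - 1) (m + 1 - i).
                 real (dp t a) * (vacP t \<nu> N a (m + 1 - 2 * k) + real (N a (m + 1 - 2 * k)))
                 + real_of_int (Delta t N a (m + 1 - 2 * k))) > 0"
    unfolding E_def L_def .
qed

end
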